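(* Let $m\ge1$ and let $1\le K\le N$ be integers with $K/N\ge\frac12+\frac1N$. Consider any received word (over a binary erasure channel, each of the $N$ symbols consisting of $m$ bits) in which more than $2(N-K+1)$ symbols contain at least one erased bit. Then under the proportional multiplicity assignment with any $M>0$, the ASD sufficient condition $S\ge\sqrt{2(K-1)C}$ is not satisfied.
   Context: Setting: a Reed–Solomon code of length $N$ and dimension $K$ over $GF(2^m)$ whose symbols are sent as $m$ bits each over a binary erasure channel. If the $j$-th received symbol has $b_j$ erased bits, it is consistent with $2^{b_j}$ candidate symbols. The proportional multiplicity assignment gives each of these candidates multiplicity $M2^{-b_j}$; the score is $S=\sum_j M2^{-b_j}$ and the (approximate) cost is $C=\frac12\sum_j 2^{b_j}(M2^{-b_j})^2$. *)

theory Defs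
  imports Complex_Main
begin

text \<open>Received word of length N: symbol j (j < N) has b j erased bits (0 \<le> b j \<le> m).
  Proportional multiplicity assignment: each of the 2^(b j) candidates of symbol j gets
  multiplicity M * 2^(-b j).\<close>

definition prop_mult :: "real \<Rightarrow> (nat \<Rightarrow> nat) \<Rightarrow> nat \<Rightarrow> real" where
  "prop_mult M b j = M / 2 ^ b j"

definition score :: "nat \<Rightarrow> real \<Rightarrow> (nat \<Rightarrow> nat) \<Rightarrow> real" where
  "score N M b = (\<Sum>j<N. prop_mult M b j)"

definition cost :: "nat \<Rightarrow> real \<Rightarrow> (nat \<Rightarrow> nat) \<Rightarrow> real" where
  "cost N M b = (1/2) * (\<Sum>j<N. 2 ^ b j * (prop_mult M b j)\<^sup>2)"

end

theory Submission
  imports Defs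
begin

theorem corollary1:
  fixes m N K :: nat and M :: real and b :: "nat \<Rightarrow> nat"
  assumes "m \<ge> 1" and "1 \<le> K" and "K \<le> N"
    and "real K / real N \<ge> 1/2 + 1 / real N"
    and "\<forall>j<N. b j \<le> m"
    and "card {j. j < N \<and> b j \<ge> 1} > 2 * (N - K + 1)"
    and "M > 0"
  shows "\<not> (score N M b \<ge> sqrt (2 * (real K - 1) * cost N M b))"
proof
  assume H: "score N M b \<ge> sqrt (2 * (real K - 1) * cost N M b)"
  define T where "T = (\<Sum>j<N. 1 / (2::real) ^ b j)"
  define e where "e = card {j. j < N \<and> b j \<ge> 1}"
  have S: "score N M b = M * T"
    unfolding score_def prop_mult_def T_def by (simp add: sum_distrib_left)
  have C: "cost N M b = 1/2 * M^2 * T"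
  proof -
    have "\<And>j. (2::real) ^ b j * (M / 2 ^ b j)\<^sup>2 = M^2 * (1 / 2 ^ b j)"
      by (simp add: power2_eq_square field_simps)
    then show ?thesis unfolding cost_def prop_mult_def T_def
      by (simp add: sum_distrib_left)
  qed
  have Npos: "N > 0" using assms(2,3) by simp
  have Tpos: "T > 0" unfolding T_def using Npos
    by (intro sum_pos) auto
  have le: "\<And>j. 1 / (2::real) ^ b j \<le> 1 - (if 1 \<le> b j then 1/2 else 0)"
  proof -
    fix j
    show "1 / (2::real) ^ b j \<le> 1 - (if 1 \<le> b j then 1/2 else 0)"
    proof (cases "1 \<le> b j")
      case True
      have "(2::real) ^ 1 \<le> 2 ^ b j" using True by (intro power_increasing) auto
      then show ?thesis using True by (simp add: field_simps)
    next
      case False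
      then show ?thesis by simp
    qed
  qed
  have "T \<le> (\<Sum>j<N. 1 - (if 1 \<le> b j then 1/2 else 0))"
    unfolding T_def by (intro sum_mono le)
  also have "\<dots> = real N - (\<Sum>j<N. (if 1 \<le> b j then 1/2 else 0))"
    by (simp add: sum_subtractf)
  also have "(\<Sum>j<N. (if 1 \<le> b j then (1::real)/2 else 0)) = real e / 2"
  proof -
    have "(\<Sum>j<N. (if 1 \<le> b j then (1::real)/2 else 0)) = (\<Sum>j\<in>{j\<in>{..<N}. 1 \<le> b j}. 1/2)"
      using sum.inter_filter[of "{..<N}" "\<lambda>_. (1::real)/2" "\<lambda>j. 1 \<le> b j"] by simp
    also have "{j\<in>{..<N}. 1 \<le> b j} = {j. j < N \<and> b j \<ge> 1}" by auto
    finally show ?thesis unfolding e_def by simp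
  qed
  finally have Tle: "T \<le> real N - real e / 2" .
  have "real e > 2 * (real N - real K + 1)"
    using assms(6) assms(3) unfolding e_def by (simp add: of_nat_diff)
  with Tle have TK: "T < real K - 1" by simp
  have "2 * (real K - 1) * cost N M b = (real K - 1) * (M^2 * T)" unfolding C by (simp add: field_simps)
  hence "M * T \<ge> sqrt ((real K - 1) * (M^2 * T))" using H S by metis
  also have "sqrt ((real K - 1) * (M^2 * T)) = M * sqrt ((real K - 1) * T)"
    using assms(7) by (simp add: real_sqrt_mult)
  finally have "M * sqrt ((real K - 1) * T) \<le> M * T" .
  hence "sqrt ((real K - 1) * T) \<le> T" using assms(7) by simp
  hence "(real K - 1) * T \<le> T^2" using assms(2) Tpos
    by (metis le_diff_eq mult_nonneg_nonneg of_nat_1 of_nat_le_iff add_0 less_imp_le real_le_lsqrt real_sqrt_le_iff sqrt_le_D)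
  hence "real K - 1 \<le> T" using Tpos by (simp add: power2_eq_square)
  with TK show False by simp
qed

end
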